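(* Let $p$ be a probability rule for stochastic many-worlds theory satisfying Axioms (A1)–(A3). Then for every allowed state $v=\sum_n v_n\lvert n\rangle$ and every $n\ge0$, $p_n(v)=v_n$.
   Context: Stochastic many-worlds theory is defined as follows. The worlds are the vectors $\lvert n\rangle$, $n\in\{0,1,2,\dots\}$, of a countably infinite basis. The allowed states are the real vectors $v=\sum_n v_n\lvert n\rangle$ with $v_n\ge0$ for all $n$ and $\sum_n v_n=1$, where $v_n$ is the amplitude of world $n$. The allowed transformations are the linear maps $T$ with matrix elements $T_{ij}\ge0$ for all $i,j$ and $\sum_i T_{ij}=1$ for every $j$, acting by $(Tv)_i=\sum_j T_{ij}v_j$. A probability rule assigns to each allowed state $v$ a sequence $(p_n(v))_{n\ge 0}$ of nonnegative reals with $\sum_n p_n(v)=1$. The axioms are: (A1) Present state dependence: $p_n$ depends only on the present state $v$, so $p$ is a function of the state alone. (A2) Weak connection with amplitudes: for every allowed state $v$, $v_n=0$ implies $p_n(v)=0$. (A3) Weak connection with transformations: for every allowed state $v$ and allowed transformation $T$, and every partition of $\{0,1,2,\dots\}$ into subsets $\mathcal S_k$ such that $T_{ij}=0$ whenever $i$ and $j$ lie in different subsets, we have $\sum_{n\in\mathcal S_k}p_n(v)=\sum_{n\in\mathcal S_k}p_n(Tv)$ for every $k$. *)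

theory Defs
  imports "HOL-Analysis.Analysis" "HOL-Library.Disjoint_Sets"
begin

definition allowed_state :: "(nat \<Rightarrow> real) \<Rightarrow> bool" where
  "allowed_state v \<longleftrightarrow> (\<forall>n. v n \<ge> 0) \<and> v sums 1"

text \<open>Allowed transformations: matrices T i j (row i, column j), nonnegative, every column sums to 1.\<close>
definition allowed_trans :: "(nat \<Rightarrow> nat \<Rightarrow> real) \<Rightarrow> bool" where
  "allowed_trans T \<longleftrightarrow> (\<forall>i j. T i j \<ge> 0) \<and> (\<forall>j. (\<lambda>i. T i j) sums 1)"

definition apply_trans :: "(nat \<Rightarrow> nat \<Rightarrow> real) \<Rightarrow> (nat \<Rightarrow> real) \<Rightarrow> nat \<Rightarrow> real" where
  "apply_trans T v i = (\<Sum>j. T i j * v j)"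

text \<open>A probability rule: for every allowed state, a sequence of nonnegative reals summing to 1.
  (A1) is built in by p being a function of the state alone.\<close>
definition prob_rule :: "((nat \<Rightarrow> real) \<Rightarrow> nat \<Rightarrow> real) \<Rightarrow> bool" where
  "prob_rule p \<longleftrightarrow> (\<forall>v. allowed_state v \<longrightarrow> (\<forall>n. p v n \<ge> 0) \<and> p v sums 1)"

definition axiom_A2 :: "((nat \<Rightarrow> real) \<Rightarrow> nat \<Rightarrow> real) \<Rightarrow> bool" where
  "axiom_A2 p \<longleftrightarrow> (\<forall>v n. allowed_state v \<longrightarrow> v n = 0 \<longrightarrow> p v n = 0)"

definition axiom_A3 :: "((nat \<Rightarrow> real) \<Rightarrow> nat \<Rightarrow> real) \<Rightarrow> bool" where
  "axiom_A3 p \<longleftrightarrow> (\<forall>v T P. allowed_state v \<longrightarrow> allowed_trans T \<longrightarrow> partition_on UNIV P \<longrightarrow>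
      (\<forall>S\<in>P. \<forall>S'\<in>P. S \<noteq> S' \<longrightarrow> (\<forall>i\<in>S. \<forall>j\<in>S'. T i j = 0)) \<longrightarrow>
      (\<forall>S\<in>P. (\<Sum>\<^sub>\<infinity>n\<in>S. p v n) = (\<Sum>\<^sub>\<infinity>n\<in>S. p (apply_trans T v) n)))"

end

theory Submission
  imports Defs
begin

lemma A3_block:
  assumes A3: "axiom_A3 p" and v: "allowed_state v" and T: "allowed_trans T"
    and B: "finite B" "B \<noteq> {}"
    and z1: "\<And>i j. i \<in> B \<Longrightarrow> j \<notin> B \<Longrightarrow> T i j = 0"
    and z2: "\<And>i j. i \<notin> B \<Longrightarrow> j \<in> B \<Longrightarrow> T i j = 0"
  shows "(\<Sum>k\<in>B. p v k) = (\<Sum>k\<in>B. p (apply_trans T v) k)"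
proof -
  let ?P = "{B, -B}"
  have "B \<noteq> UNIV" using B(1) infinite_UNIV_nat by auto
  then have part: "partition_on UNIV ?P"
    using B by (auto simp: partition_on_def disjoint_def)
  have blk: "\<forall>S\<in>?P. \<forall>S'\<in>?P. S \<noteq> S' \<longrightarrow> (\<forall>i\<in>S. \<forall>j\<in>S'. T i j = 0)"
    using z1 z2 by auto
  have "(\<Sum>\<^sub>\<infinity>n\<in>B. p v n) = (\<Sum>\<^sub>\<infinity>n\<in>B. p (apply_trans T v) n)"
    using A3 v T part blk unfolding axiom_A3_def by blast
  then show ?thesis using B by simp
qed

lemma off_sums:
  assumes "allowed_state v"
  shows "(\<lambda>j. if j = n then 0 else v j) sums (1 - v n)"
proof -
  have "v sums 1" using assms by (simp add: allowed_state_def)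
  from sums_diff[OF this sums_single[of n v]]
  show ?thesis by (simp add: if_distrib cong: if_cong)
qed

lemma le1:
  assumes "allowed_state v" shows "v n \<le> 1"
proof -
  have "0 \<le> suminf (\<lambda>j. if j = n then 0 else v j)"
    using off_sums[OF assms, of n] assms
    by (intro suminf_nonneg) (auto simp: allowed_state_def sums_iff)
  then show ?thesis using off_sums[OF assms, of n] by (simp add: sums_iff)
qed

lemma L1:
  assumes A3: "axiom_A3 p" and v: "allowed_state v" and v': "allowed_state v'"
    and eq: "v n = v' n"
  shows "p v n = p v' n"
proof (cases "v n = 1")
  case True
  have zero: "\<And>w j. allowed_state w \<Longrightarrow> w n = 1 \<Longrightarrow> j \<noteq> n \<Longrightarrow> w j = 0"
  proof -
    fix w j assume w: "allowed_state w" and wn: "w n = 1" and j: "j \<noteq> n"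
    have s: "(\<lambda>j. if j = n then 0 else w j) sums 0" using off_sums[OF w, of n] wn by simp
    have "\<forall>k. (if k = n then 0 else w k) = 0"
      using s w by (subst suminf_eq_zero_iff[symmetric]) (auto simp: sums_iff allowed_state_def)
    then show "w j = 0" using j by metis
  qed
  have "v = v'"
  proof
    fix j show "v j = v' j"
      using zero[OF v True, of j] zero[OF v', of j] True eq by (cases "j = n") auto
  qed
  then show ?thesis by simp
next
  case False
  define a where "a = v n"
  have a1: "a < 1" using le1[OF v, of n] False by (simp add: a_def)
  define T where "T = (\<lambda>i j. if i = n then (if j = n then 1 else 0)
      else (if j = n then 0 else v' i / (1 - a)))"
  have v'nn: "\<And>i. v' i \<ge> 0" using v' by (simp add: allowed_state_def)
  have trans: "allowed_trans T"
    unfolding allowed_trans_def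
  proof (intro conjI allI)
    fix i j show "0 \<le> T i j" using v'nn a1 by (simp add: T_def)
  next
    fix j
    show "(\<lambda>i. T i j) sums 1"
    proof (cases "j = n")
      case True
      have e: "(\<lambda>i. T i j) = (\<lambda>i. if i = n then 1 else 0)"
        unfolding T_def using True by (intro ext) simp
      show ?thesis unfolding e by (rule sums_single[of n "\<lambda>_. (1::real)", simplified])
    next
      case False
      have "(\<lambda>i. (if i = n then 0 else v' i) / (1 - a)) sums ((1 - v' n) / (1 - a))"
        by (rule sums_divide[OF off_sums[OF v']])
      moreover have "(\<lambda>i. T i j) = (\<lambda>i. (if i = n then 0 else v' i) / (1 - a))"
        using False by (intro ext) (simp add: T_def)
      moreover have "(1 - v' n) / (1 - a) = 1" using a1 eq by (simp add: a_def)
      ultimately show ?thesis by simp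
    qed
  qed
  have app: "apply_trans T v = v'"
  proof
    fix i
    show "apply_trans T v i = v' i"
    proof (cases "i = n")
      case True
      have "(\<lambda>j. T i j * v j) = (\<lambda>j. if j = n then v j else 0)"
        using True by (intro ext) (simp add: T_def)
      then have "(\<lambda>j. T i j * v j) sums v n"
        using sums_single[of n v] by simp
      then show ?thesis using True eq by (simp add: apply_trans_def sums_iff)
    next
      case False
      have "(\<lambda>j. v' i / (1 - a) * (if j = n then 0 else v j)) sums (v' i / (1 - a) * (1 - v n))"
        by (rule sums_mult[OF off_sums[OF v]])
      moreover have "(\<lambda>j. T i j * v j) = (\<lambda>j. v' i / (1 - a) * (if j = n then 0 else v j))"
        using False by (intro ext) (simp add: T_def)
      moreover have "v' i / (1 - a) * (1 - v n) = v' i" using a1 by (simp add: a_def)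
      ultimately have "(\<lambda>j. T i j * v j) sums v' i" by simp
      then show ?thesis by (simp add: apply_trans_def sums_iff)
    qed
  qed
  have "(\<Sum>k\<in>{n}. p v k) = (\<Sum>k\<in>{n}. p (apply_trans T v) k)"
    by (rule A3_block[OF A3 v trans]) (auto simp: T_def)
  then show ?thesis using app by simp
qed


definition st :: "nat \<Rightarrow> real \<Rightarrow> real \<Rightarrow> nat \<Rightarrow> real" where
  "st n a b i = (if i = n then a else if i = Suc n then b else if i = Suc (Suc n) then 1 - a - b else 0)"

lemma st_allowed:
  assumes "0 \<le> a" "0 \<le> b" "a + b \<le> 1"
  shows "allowed_state (st n a b)"
proof -
  have "st n a b sums (\<Sum>i\<in>{n, Suc n, Suc (Suc n)}. st n a b i)"
    by (rule sums_finite) (auto simp: st_def)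
  moreover have "(\<Sum>i\<in>{n, Suc n, Suc (Suc n)}. st n a b i) = 1" by (simp add: st_def)
  ultimately show ?thesis using assms unfolding allowed_state_def by (auto simp: st_def)
qed

definition G :: "((nat \<Rightarrow> real) \<Rightarrow> nat \<Rightarrow> real) \<Rightarrow> nat \<Rightarrow> real \<Rightarrow> real" where
  "G p n x = p (st n x 0) n"

lemma LG:
  assumes A3: "axiom_A3 p" and v: "allowed_state v"
  shows "p v n = G p n (v n)"
proof -
  have "0 \<le> v n" using v by (simp add: allowed_state_def)
  then have "allowed_state (st n (v n) 0)" using le1[OF v, of n] by (intro st_allowed) auto
  from L1[OF A3 v this] show ?thesis by (simp add: G_def st_def)
qed

definition M :: "nat \<Rightarrow> nat \<Rightarrow> nat \<Rightarrow> real" where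
  "M n i j = (if j = Suc n then (if i = n then 1 else 0) else (if i = j then 1 else 0))"

lemma M_trans: "allowed_trans (M n)"
  unfolding allowed_trans_def
proof (intro conjI allI)
  fix i j show "0 \<le> M n i j" by (simp add: M_def)
next
  fix j
  have e: "(\<lambda>i. M n i j) = (\<lambda>i. if i = (if j = Suc n then n else j) then 1 else 0)"
    by (intro ext) (simp add: M_def)
  show "(\<lambda>i. M n i j) sums 1" unfolding e
    by (rule sums_single[of _ "\<lambda>_. (1::real)", simplified])
qed

lemma M_apply:
  "apply_trans (M n) w i = (if i = n then w n + w (Suc n) else if i = Suc n then 0 else w i)"
proof -
  have "apply_trans (M n) w i = (\<Sum>j\<in>{i, Suc n}. M n i j * w j)"
    unfolding apply_trans_def by (rule suminf_finite) (auto simp: M_def)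
  then show ?thesis by (auto simp: M_def)
qed

lemma G_add:
  assumes P: "prob_rule p" and A2: "axiom_A2 p" and A3: "axiom_A3 p"
    and ab: "0 \<le> a" "0 \<le> b" "a + b \<le> 1"
  shows "G p n a + G p (Suc n) b = G p n (a + b)"
proof -
  let ?w = "st n a b"
  have w: "allowed_state ?w" using ab by (rule st_allowed)
  have Tw: "apply_trans (M n) ?w = st n (a + b) 0"
    by (intro ext) (simp add: M_apply st_def)
  have w': "allowed_state (st n (a + b) 0)" using ab by (intro st_allowed) auto
  have "(\<Sum>k\<in>{n, Suc n}. p ?w k) = (\<Sum>k\<in>{n, Suc n}. p (apply_trans (M n) ?w) k)"
    by (rule A3_block[OF A3 w M_trans]) (auto simp: M_def)
  then have "p ?w n + p ?w (Suc n) = p (st n (a + b) 0) n + p (st n (a + b) 0) (Suc n)"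
    unfolding Tw by simp
  moreover have "p (st n (a + b) 0) (Suc n) = 0"
    using A2 w' unfolding axiom_A2_def by (auto simp: st_def)
  moreover have "p ?w n = G p n a" using LG[OF A3 w, of n] by (simp add: st_def)
  moreover have "p ?w (Suc n) = G p (Suc n) b" using LG[OF A3 w, of "Suc n"] by (simp add: st_def)
  moreover have "p (st n (a + b) 0) n = G p n (a + b)" by (simp add: G_def)
  ultimately show ?thesis by simp
qed

lemma G0:
  assumes A2: "axiom_A2 p" shows "G p n 0 = 0"
proof -
  have "allowed_state (st n 0 0)" by (rule st_allowed) auto
  then show ?thesis using A2 unfolding axiom_A2_def G_def by (auto simp: st_def)
qed

lemma G1:
  assumes P: "prob_rule p" and A2: "axiom_A2 p" shows "G p n 1 = 1"
proof -
  let ?e = "st n 1 0"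
  have e: "allowed_state ?e" by (rule st_allowed) auto
  have z: "\<And>i. i \<noteq> n \<Longrightarrow> p ?e i = 0" using A2 e unfolding axiom_A2_def by (auto simp: st_def)
  have "p ?e sums 1" using P e unfolding prob_rule_def by blast
  moreover have "p ?e = (\<lambda>i. if i = n then p ?e i else 0)" using z by (intro ext) auto
  ultimately have "(\<lambda>i. if i = n then p ?e i else 0) sums 1" by simp
  then have "p ?e n = 1" using sums_single[of n "p ?e"] sums_unique2 by blast
  then show ?thesis by (simp add: G_def)
qed

lemma Gnn:
  assumes P: "prob_rule p" and x: "0 \<le> x" "x \<le> 1" shows "0 \<le> G p n x"
proof -
  have "allowed_state (st n x 0)" using x by (intro st_allowed) auto
  then show ?thesis using P unfolding prob_rule_def G_def by blast
qed

lemma cauchy_lower: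
  fixes g :: "real \<Rightarrow> real"
  assumes nn: "\<And>x. 0 \<le> x \<Longrightarrow> x \<le> 1 \<Longrightarrow> 0 \<le> g x"
    and add: "\<And>a b. 0 \<le> a \<Longrightarrow> 0 \<le> b \<Longrightarrow> a + b \<le> 1 \<Longrightarrow> g (a + b) = g a + g b"
    and one: "g 1 = 1"
    and x: "0 \<le> x" "x \<le> 1" and N: "N > (0::nat)"
  shows "x - 1 / real N \<le> g x"
proof -
  have mono: "g a \<le> g c" if "0 \<le> a" "a \<le> c" "c \<le> 1" for a c
  proof -
    have "g c = g a + g (c - a)" using add[of a "c - a"] that by simp
    then show ?thesis using nn[of "c - a"] that by simp
  qed
  have mult: "g (real k * y) = real k * g y" if "0 \<le> y" "real k * y \<le> 1" for k y
    using that
  proof (induction k)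
    case 0
    have "g 0 = g 0 + g 0" using add[of 0 0] by simp
    then show ?case by simp
  next
    case (Suc k)
    have "real k * y \<le> real (Suc k) * y" using Suc.prems by (simp add: mult_right_mono)
    then have h: "real k * y \<le> 1" using Suc.prems by linarith
    have "g (real (Suc k) * y) = g (real k * y + y)" by (simp add: algebra_simps)
    also have "\<dots> = g (real k * y) + g y"
      using add[of "real k * y" y] Suc.prems h by (simp add: algebra_simps)
    also have "\<dots> = real (Suc k) * g y" using Suc.IH[OF Suc.prems(1) h] by (simp add: algebra_simps)
    finally show ?case .
  qed
  have inv: "g (1 / real N) = 1 / real N"
  proof -
    have "g (real N * (1 / real N)) = real N * g (1 / real N)" using N by (intro mult) auto
    then show ?thesis using N one by (simp add: field_simps)
  qed
  define k where "k = nat \<lfloor>real N * x\<rfloor>"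
  have k1: "real k \<le> real N * x" using x N by (simp add: k_def)
  have k2: "real N * x < real k + 1" using x N by (simp add: k_def)
  have "real N * x \<le> real N" using x by (simp add: mult_left_le)
  then have kN: "real k \<le> real N" using k1 by linarith
  have kx: "real k / real N \<le> x" using k1 N by (simp add: field_simps)
  have "g (real k * (1 / real N)) = real k * g (1 / real N)"
    using kx x N kN by (intro mult) (auto simp: divide_le_eq)
  then have gk: "g (real k / real N) = real k / real N" using inv by simp
  have "g (real k / real N) \<le> g x" using kx x N by (intro mono) auto
  moreover have "x - 1 / real N \<le> real k / real N"
  proof -
    have "x - 1 / real N = (real N * x - 1) / real N" using N by (simp add: field_simps)
    also have "\<dots> \<le> real k / real N" using k2 by (intro divide_right_mono) auto
    finally show ?thesis .
  qed
  ultimately show ?thesis using gk by linarith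
qed

lemma cauchy:
  fixes g :: "real \<Rightarrow> real"
  assumes nn: "\<And>x. 0 \<le> x \<Longrightarrow> x \<le> 1 \<Longrightarrow> 0 \<le> g x"
    and add: "\<And>a b. 0 \<le> a \<Longrightarrow> 0 \<le> b \<Longrightarrow> a + b \<le> 1 \<Longrightarrow> g (a + b) = g a + g b"
    and one: "g 1 = 1"
    and x: "0 \<le> x" "x \<le> 1"
  shows "g x = x"
proof (rule ccontr)
  assume ne: "g x \<noteq> x"
  then have "0 < \<bar>g x - x\<bar>" by simp
  then obtain N where N: "inverse (real (Suc N)) < \<bar>g x - x\<bar>" using reals_Archimedean by blast
  have l1: "x - 1 / real (Suc N) \<le> g x"
    using cauchy_lower[OF nn add one x] by blast
  have l2: "(1 - x) - 1 / real (Suc N) \<le> g (1 - x)"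
    using cauchy_lower[OF nn add one, of "1 - x" "Suc N"] x by simp
  have "g 1 = g x + g (1 - x)" using add[of x "1 - x"] x by simp
  then have "g x \<le> x + 1 / real (Suc N)" using l2 one by linarith
  with l1 N show False by (simp add: inverse_eq_divide abs_if split: if_splits)
qed

theorem theorem4:
  fixes p :: "(nat \<Rightarrow> real) \<Rightarrow> nat \<Rightarrow> real"
  assumes "prob_rule p" and "axiom_A2 p" and "axiom_A3 p"
  shows "\<forall>v. allowed_state v \<longrightarrow> (\<forall>n. p v n = v n)"
proof (intro allI impI)
  fix v n assume v: "allowed_state v"
  have Gs: "G p (Suc m) b = G p m b" if "0 \<le> b" "b \<le> 1" for m b
    using G_add[OF assms, of 0 b m] G0[OF assms(2), of m] that by simp
  have "G p n y = y" if "0 \<le> y" "y \<le> 1" for y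
  proof (rule cauchy[OF _ _ _ that])
    show "\<And>x. 0 \<le> x \<Longrightarrow> x \<le> 1 \<Longrightarrow> 0 \<le> G p n x" using Gnn[OF assms(1)] by blast
    show "G p n (a + b) = G p n a + G p n b" if "0 \<le> a" "0 \<le> b" "a + b \<le> 1" for a b
      using G_add[OF assms that, of n] Gs[of b n] that by simp
    show "G p n 1 = 1" by (rule G1[OF assms(1,2)])
  qed
  moreover have "0 \<le> v n" using v by (simp add: allowed_state_def)
  ultimately show "p v n = v n" using LG[OF assms(3) v, of n] le1[OF v, of n] by simp
qed

end
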